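(* Consider the pairing urn model: an urn initially contains $k=k(n)$ red balls and $n-k$ white balls; at each step one red ball is removed and then a second ball is chosen uniformly at random among the balls remaining in the urn and removed; the process continues until no red ball is left. Let $R_i$ be the number of red balls removed during the first $i$ steps and $T:=\inf\{i\ge0:(k-R_i)/(n-2i)<1/2\}$. If $k(n)=X_0n+o_{\mathbb{P}}(n)$ for some $0<X_0<1$, then with high probability $T<n/2$.
   Context: "With high probability" means with probability $1-o(1)$ as $n\to\infty$; $X_n=o_{\mathbb{P}}(n)$ means $X_n/n\to0$ in probability. *)

theory Defs
  imports "HOL-Probability.Probability"
begin

text \<open>A state is (r, w) = (number of red, number of white balls).
 One step: remove one red ball, then remove a ball chosen uniformly at random among
 the r - 1 + w remaining balls (it is red with probability (r-1)/(r-1+w)).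
 Once no red ball is left the process has ended; we keep the state constant then.
 If no ball remains after removing the red ball (r = 1, w = 0) the process ends too.\<close>

definition urn_step :: "nat \<times> nat \<Rightarrow> (nat \<times> nat) pmf" where
  "urn_step s = (case s of (r, w) \<Rightarrow>
     if r = 0 then return_pmf (r, w)
     else if r - 1 + w = 0 then return_pmf (0, w)
     else map_pmf (\<lambda>b. if b then (r - 2, w) else (r - 1, w - 1))
                  (bernoulli_pmf (real (r - 1) / real (r - 1 + w))))"

text \<open>Trajectory of the states s_0, s_1, ..., s_m (a list of length m+1).\<close>

fun urn_traj :: "nat \<Rightarrow> nat \<times> nat \<Rightarrow> (nat \<times> nat) list pmf" where
  "urn_traj 0 s = return_pmf [s]"
| "urn_traj (Suc m) s = bind_pmf (urn_step s) (\<lambda>s'. map_pmf (Cons s) (urn_traj m s'))"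

definition urn_R :: "nat \<Rightarrow> (nat \<times> nat) list \<Rightarrow> nat \<Rightarrow> nat" where
  "urn_R k p i = k - fst (p ! i)"

text \<open>T = inf {i \<ge> 0 : (k - R_i)/(n - 2i) < 1/2}; indices up to n suffice for the
 event T < n/2 (infimum of the empty set is \<infinity>).\<close>

definition urn_T :: "nat \<Rightarrow> nat \<Rightarrow> (nat \<times> nat) list \<Rightarrow> enat" where
  "urn_T n k p = Inf (enat ` {i. i \<le> n \<and>
      (real k - real (urn_R k p i)) / (real n - 2 * real i) < 1 / 2})"

definition urn_run :: "nat \<Rightarrow> nat pmf \<Rightarrow> (nat \<times> (nat \<times> nat) list) pmf" where
  "urn_run n K = bind_pmf K (\<lambda>k. map_pmf (\<lambda>p. (k, p)) (urn_traj n (k, n - k)))"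

end

theory Submission imports Defs "HOL-Real_Asymp.Real_Asymp" begin

lemma prob_bind_pmf: "measure_pmf.prob (bind_pmf M f) X = (\<integral>x. measure_pmf.prob (f x) X \<partial>M)"
  using measurable_measure_pmf[of f]
  by (simp add: measure_pmf_bind measure_pmf.measure_bind[where N="count_space UNIV"])

fun phi :: "nat \<Rightarrow> nat \<Rightarrow> real" where
  "phi r 0 = 1"
| "phi r (Suc w) = (if r < Suc w then 0 else real r / real (r + w) * phi (r - 1) w)"

lemma phi_nonneg: "phi r w \<ge> 0"
  by (induction w arbitrary: r) auto

lemma phi_le1: "phi r w \<le> 1"
proof (induction w arbitrary: r)
  case 0 then show ?case by simp
next
  case (Suc w)
  show ?case
  proof (cases "r < Suc w")
    case False
    have a: "real r / real (r + w) \<le> 1" using False by simp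
    have "real r / real (r + w) * phi (r - 1) w \<le> 1 * 1"
      by (rule mult_mono[OF a Suc.IH]) (auto simp: phi_nonneg)
    then show ?thesis using False by simp
  qed simp
qed

lemma phi_L: "b \<le> a \<Longrightarrow> real a * phi (a - 1) (Suc b) \<le> real (a - b) * phi a b"
proof (induction b arbitrary: a)
  case 0
  then show ?case by (cases "a < 2") (auto simp: of_nat_diff)
next
  case (Suc b)
  show ?case
  proof (cases "a - 1 < Suc (Suc b)")
    case True
    then show ?thesis using phi_nonneg[of a "Suc b"] by simp
  next
    case False
    have ih: "real (a - 1) * phi (a - 1 - 1) (Suc b) \<le> real (a - 1 - b) * phi (a - 1) b"
      using Suc.IH[of "a - 1"] Suc.prems False by simp
    have p1: "phi (a - 1) (Suc (Suc b)) = real (a - 1) / real (a + b) * phi (a - 2) (Suc b)"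
      using False by (simp add: numeral_2_eq_2)
    have p2: "phi a (Suc b) = real a / real (a + b) * phi (a - 1) b"
      using False by simp
    have "real a * phi (a - 1) (Suc (Suc b)) = real a / real (a + b) * (real (a - 1) * phi (a - 2) (Suc b))"
      unfolding p1 by simp
    also have "\<dots> \<le> real a / real (a + b) * (real (a - 1 - b) * phi (a - 1) b)"
      using ih by (intro mult_left_mono) (auto simp: numeral_2_eq_2)
    also have "\<dots> = real (a - Suc b) * phi a (Suc b)"
      unfolding p2 by simp
    finally show ?thesis .
  qed
qed

lemma phi_super:
  assumes "1 \<le> r" "2 \<le> r + w" "w \<le> r"
  shows "real (r - 1) / real (r - 1 + w) * phi (r - 2) w
         + (1 - real (r - 1) / real (r - 1 + w)) * phi (r - 1) (w - 1) \<le> phi r w"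
proof (cases w)
  case 0
  then show ?thesis using assms phi_le1[of "r-2" 0] by (simp add: divide_le_eq)
next
  case (Suc b)
  have L: "real (r - 1) * phi (r - 2) w \<le> real (r - w) * phi (r - 1) b"
    using phi_L[of b "r - 1"] assms Suc by (simp add: numeral_2_eq_2)
  have d: "real (r - 1 + w) > 0" using assms by simp
  have e: "1 - real (r - 1) / real (r - 1 + w) = real w / real (r - 1 + w)"
    using d assms by (simp add: field_simps of_nat_diff)
  have "real (r - 1) / real (r - 1 + w) * phi (r - 2) w + real w / real (r - 1 + w) * phi (r - 1) b
      = (real (r - 1) * phi (r - 2) w + real w * phi (r - 1) b) / real (r - 1 + w)"
    by (simp only: add_divide_distrib times_divide_eq_left)
  also have "\<dots> \<le> (real (r - w) * phi (r - 1) b + real w * phi (r - 1) b) / real (r - 1 + w)"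
    using L d by (intro divide_right_mono) auto
  also have "\<dots> = phi r w"
    using Suc assms by (simp add: field_simps of_nat_diff)
  finally show ?thesis using e Suc by simp
qed

definition badp :: "(nat \<times> nat) list \<Rightarrow> bool" where
  "badp p = (\<forall>x\<in>set p. fst x + snd x > 0 \<longrightarrow> snd x \<le> fst x)"

lemma badp_Cons: "badp (s # p) = ((fst s + snd s > 0 \<longrightarrow> snd s \<le> fst s) \<and> badp p)"
  by (simp add: badp_def)

lemma traj_bad:
  "fst s + snd s \<le> 2 * m + 1 \<Longrightarrow> measure_pmf.prob (urn_traj m s) {p. badp p} \<le> phi (fst s) (snd s)"
proof (induction m arbitrary: s)
  case 0
  obtain r w where s: "s = (r, w)" by (cases s)
  show ?case
  proof (cases "badp [s]")
    case True
    then have "w = 0" using 0 s by (auto simp: badp_def)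
    then show ?thesis using s by simp
  next
    case False
    then have "{p. badp p} \<inter> set_pmf (urn_traj 0 s) = {}" by auto
    then have "measure_pmf.prob (urn_traj 0 s) {p. badp p} = 0"
      by (simp add: measure_pmf_zero_iff)
    then show ?thesis by (simp add: phi_nonneg)
  qed
next
  case (Suc m)
  obtain r w where s: "s = (r, w)" by (cases s)
  have eq: "measure_pmf.prob (urn_traj (Suc m) s) {p. badp p}
     = (\<integral>s'. measure_pmf.prob (urn_traj m s') (Cons s -` {p. badp p}) \<partial>urn_step s)"
    by (simp add: prob_bind_pmf)
  show ?case
  proof (cases "r + w > 0 \<longrightarrow> w \<le> r")
    case False
    then have "Cons s -` {p. badp p} = {}" using s by (auto simp: badp_def)
    then show ?thesis using eq by (simp add: phi_nonneg)
  next
    case True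
    note T = True
    show ?thesis
    proof (cases "w = 0")
      case True
      then show ?thesis using s by simp
    next
      case False
      then have r1: "1 \<le> r" "2 \<le> r + w" "w \<le> r" using T by auto
      define q where "q = real (r - 1) / real (r - 1 + w)"
      have q: "0 \<le> q" "q \<le> 1" using r1 by (auto simp: q_def)
      have pre: "Cons s -` {p. badp p} = {p. badp p}" using s T by (auto simp: badp_def)
      have step: "urn_step s = map_pmf (\<lambda>b. if b then (r - 2, w) else (r - 1, w - 1)) (bernoulli_pmf q)"
        using r1 s by (simp add: urn_step_def q_def)
      have "measure_pmf.prob (urn_traj (Suc m) s) {p. badp p}
          = measure_pmf.prob (urn_traj m (r - 2, w)) {p. badp p} * q
            + measure_pmf.prob (urn_traj m (r - 1, w - 1)) {p. badp p} * (1 - q)"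
        unfolding eq pre step using q by simp
      also have "\<dots> \<le> phi (r - 2) w * q + phi (r - 1) (w - 1) * (1 - q)"
      proof -
        have i1: "measure_pmf.prob (urn_traj m (r - 2, w)) {p. badp p} \<le> phi (r - 2) w"
          using Suc.IH[of "(r - 2, w)"] Suc.prems s r1 by simp
        have i2: "measure_pmf.prob (urn_traj m (r - 1, w - 1)) {p. badp p} \<le> phi (r - 1) (w - 1)"
          using Suc.IH[of "(r - 1, w - 1)"] Suc.prems s r1 False by simp
        show ?thesis using i1 i2 q by (intro add_mono mult_right_mono) auto
      qed
      also have "\<dots> \<le> phi r w"
        using phi_super[OF r1] unfolding q_def by (simp add: mult.commute)
      finally show ?thesis using s by simp
    qed
  qed
qed

lemma step_fst: "s' \<in> set_pmf (urn_step s) \<Longrightarrow> fst s' \<le> fst s"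
  by (cases s) (auto simp: urn_step_def split: if_splits)

lemma step_zero: "s' \<in> set_pmf (urn_step (r, w)) \<Longrightarrow> r = 0 \<or> r - 1 + w = 0 \<Longrightarrow> s' = (0, w)"
  by (auto simp: urn_step_def split: if_splits)

lemma step_main:
  assumes "s' \<in> set_pmf (urn_step (r, w))" "r \<ge> 1" "r - 1 + w > 0"
  shows "(s' = (r - 2, w) \<and> r \<ge> 2) \<or> (s' = (r - 1, w - 1) \<and> w \<ge> 1)"
proof -
  define q where "q = real (r - 1) / real (r - 1 + w)"
  have q: "0 \<le> q" "q \<le> 1" using assms by (auto simp: q_def)
  obtain b where b: "b \<in> set_pmf (bernoulli_pmf q)"
    and s': "s' = (if b then (r - 2, w) else (r - 1, w - 1))"
    using assms by (auto simp: urn_step_def q_def)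
  show ?thesis
  proof (cases b)
    case True
    then have "q \<noteq> 0" using b q by (auto simp: set_pmf_iff)
    then have "r \<ge> 2" by (auto simp: q_def)
    then show ?thesis using s' True by simp
  next
    case False
    then have "q \<noteq> 1" using b q by (auto simp: set_pmf_iff)
    then have "w \<ge> 1" using assms by (auto simp: q_def)
    then show ?thesis using s' False by simp
  qed
qed

lemma traj_length: "p \<in> set_pmf (urn_traj m s) \<Longrightarrow> length p = Suc m"
  by (induction m arbitrary: s p) auto

lemma traj_fst: "p \<in> set_pmf (urn_traj m s) \<Longrightarrow> x \<in> set p \<Longrightarrow> fst x \<le> fst s"
proof (induction m arbitrary: s p)
  case 0 then show ?case by simp
next
  case (Suc m)
  then obtain s' p' where a: "s' \<in> set_pmf (urn_step s)" and b: "p' \<in> set_pmf (urn_traj m s')"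
    and c: "p = s # p'"
    by auto
  show ?case using Suc.IH[OF b] Suc.prems step_fst[OF a] c by auto
qed

lemma traj_good:
  "p \<in> set_pmf (urn_traj m s) \<Longrightarrow>
   badp p \<or> (\<exists>j\<le>m. 2 * j < fst s + snd s \<and> 2 * fst (p ! j) + 2 * j < fst s + snd s)"
proof (induction m arbitrary: s p)
  case 0
  obtain r w where s: "s = (r, w)" by (cases s)
  then show ?case using 0 by (auto simp: badp_def)
next
  case (Suc m)
  obtain r w where s: "s = (r, w)" by (cases s)
  obtain s' p' where s': "s' \<in> set_pmf (urn_step s)" and p': "p' \<in> set_pmf (urn_traj m s')"
    and p: "p = s # p'"
    using Suc.prems by auto
  show ?case
  proof (cases "r + w > 0 \<longrightarrow> w \<le> r")
    case False
    then show ?thesis using s p by (intro disjI2 exI[of _ 0]) auto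
  next
    case T: True
    show ?thesis
    proof (cases "r = 0 \<or> r - 1 + w = 0")
      case True
      then have s'0: "s' = (0, 0)" using step_zero[of s' r w] s s' T by auto
      have "badp p'" using Suc.IH[OF p'] s'0 by auto
      then show ?thesis using p s T by (simp add: badp_Cons)
    next
      case False
      then have "(s' = (r - 2, w) \<and> r \<ge> 2) \<or> (s' = (r - 1, w - 1) \<and> w \<ge> 1)"
        using step_main[of s' r w] s s' by auto
      then have N: "fst s' + snd s' + 2 = r + w" using False by auto
      from Suc.IH[OF p'] show ?thesis
      proof
        assume "badp p'"
        then show ?thesis using p s T by (simp add: badp_Cons)
      next
        assume "\<exists>j\<le>m. 2 * j < fst s' + snd s' \<and> 2 * fst (p' ! j) + 2 * j < fst s' + snd s'"
        then obtain j where "j \<le> m" "2 * j < fst s' + snd s'" "2 * fst (p' ! j) + 2 * j < fst s' + snd s'"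
          by blast
        then show ?thesis using N p s by (intro disjI2 exI[of _ "Suc j"]) auto
      qed
    qed
  qed
qed

lemma success:
  assumes k: "k \<le> n" and p: "p \<in> set_pmf (urn_traj n (k, n - k))" and nb: "\<not> badp p"
  shows "case urn_T n k p of enat i \<Rightarrow> real i < real n / 2 | \<infinity> \<Rightarrow> False"
proof -
  obtain j where j: "j \<le> n" "2 * j < n" "2 * fst (p ! j) + 2 * j < n"
    using traj_good[OF p] nb k by auto
  have "j < length p" using traj_length[OF p] j by simp
  then have "fst (p ! j) \<le> k" using traj_fst[OF p, of "p ! j"] by simp
  then have R: "real k - real (urn_R k p j) = real (fst (p ! j))"
    by (simp add: urn_R_def of_nat_diff)
  have pos: "real n - 2 * real j > 0" using j by linarith
  have "real (fst (p ! j)) / (real n - 2 * real j) < 1 / 2"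
    using pos j(3) by (simp add: divide_less_eq)
  then have "enat j \<in> enat ` {i. i \<le> n \<and>
      (real k - real (urn_R k p i)) / (real n - 2 * real i) < 1 / 2}"
    using R j by auto
  then have le: "urn_T n k p \<le> enat j" unfolding urn_T_def by (rule Inf_lower)
  show ?thesis
  proof (cases "urn_T n k p")
    case (enat i)
    then have "i \<le> j" using le by simp
    then show ?thesis using enat j by simp
  next
    case infinity
    then show ?thesis using le by simp
  qed
qed

lemma phi_pow: "m \<le> w \<Longrightarrow> phi r w \<le> (real r / real (r + w - m)) ^ m"
proof (induction m arbitrary: r w)
  case 0 then show ?case by (simp add: phi_le1)
next
  case (Suc m)
  then obtain w' where w: "w = Suc w'" by (cases w) auto
  show ?case
  proof (cases "r < w")
    case True
    then show ?thesis using w by simp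
  next
    case False
    have r1: "r \<ge> 1" using False w by simp
    have m: "m \<le> w'" using Suc.prems w by simp
    have ih: "phi (r - 1) w' \<le> (real (r - 1) / real (r - 1 + w' - m)) ^ m"
      using Suc.IH[OF m] .
    have a: "real (r - 1) / real (r - 1 + w' - m) \<le> real r / real (r + w' - m)"
    proof (cases "r - 1 + w' - m = 0")
      case True then show ?thesis by simp
    next
      case False
      have p1: "real (r - 1 + w' - m) > 0" using False by simp
      have p2: "real (r + w' - m) > 0" using r1 m by simp
      have "real (r - 1) * real (r + w' - m) \<le> real r * real (r - 1 + w' - m)"
        using r1 m by (simp add: of_nat_diff algebra_simps)
      then show ?thesis using p1 p2 by (simp add: divide_simps)
    qed
    have b: "real r / real (r + w') \<le> real r / real (r + w' - m)"
      using r1 m by (intro divide_left_mono) auto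
    have "phi r w = real r / real (r + w') * phi (r - 1) w'" using False w by simp
    also have "\<dots> \<le> real r / real (r + w' - m) * (real r / real (r + w' - m)) ^ m"
      using b ih a by (intro mult_mono order.trans[OF ih] power_mono) (auto simp: phi_nonneg)
    also have "\<dots> = (real r / real (r + w - Suc m)) ^ Suc m" using w by simp
    finally show ?thesis .
  qed
qed

lemma phi_exp:
  assumes c: "0 < c" "c \<le> 1" and k: "k \<le> n" and w: "real (n - k) \<ge> c * real n" and n: "n > 0"
  shows "phi k (n - k) \<le> exp (- (c / 2) * (c * real n / 2 - 1))"
proof -
  define w where "w = n - k"
  define m where "m = w div 2"
  have mw: "m \<le> w" by (simp add: m_def)
  have m2: "real m \<ge> real w / 2 - 1 / 2" unfolding m_def by linarith
  have m3: "2 * real m \<le> real w" unfolding m_def by linarith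
  have wc: "real w \<ge> c * real n" using w by (simp add: w_def)
  have kw: "k + w = n" using k by (simp add: w_def)
  have ratio: "real k / real (k + w - m) \<le> 1 - c / 2"
  proof -
    have pos: "real (k + w - m) > 0" using kw mw m3 n wc c
      by (simp add: of_nat_diff)
    have "real k \<le> (1 - c / 2) * real (k + w - m)"
    proof -
      have e1: "real n = real k + real w" using kw by simp
      have e2: "c * real m \<ge> 0" using c by simp
      have "real k + (real m + (c * real n - c * real m) / 2) \<le> real n"
      proof -
        have "(c * real n - c * real m) / 2 = c * real n / 2 - c * real m / 2" by simp
        then show ?thesis using e1 e2 m3 wc by linarith
      qed
      then show ?thesis using kw mw by (simp add: of_nat_diff algebra_simps)
    qed
    then show ?thesis using pos by (simp add: divide_simps)
  qed
  have "phi k w \<le> (real k / real (k + w - m)) ^ m" by (rule phi_pow[OF mw])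
  also have "\<dots> \<le> (1 - c / 2) ^ m" by (intro power_mono ratio) auto
  also have "\<dots> \<le> exp (- (c / 2)) ^ m"
    using exp_ge_add_one_self[of "- (c / 2)"] c by (intro power_mono) auto
  also have "\<dots> = exp (- (c / 2) * real m)" by (simp add: exp_of_nat_mult[symmetric] mult.commute)
  also have "\<dots> \<le> exp (- (c / 2) * (c * real n / 2 - 1))"
    using m2 wc c by (simp add: mult_left_mono)
  finally show ?thesis by (simp add: w_def)
qed

lemma exp_lim:
  assumes "0 < (c::real)"
  shows "(\<lambda>n::nat. exp (- (c / 2) * (c * real n / 2 - 1))) \<longlonglongrightarrow> 0"
  using assms by real_asymp

theorem lemma6:
  fixes K :: "nat \<Rightarrow> nat pmf" and X0 :: real
  assumes "0 < X0" and "X0 < 1"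
    and "\<And>n. set_pmf (K n) \<subseteq> {..n}"
    and "\<And>\<epsilon>. \<epsilon> > 0 \<Longrightarrow>
           (\<lambda>n. measure_pmf.prob (K n) {k. \<bar>real k - X0 * real n\<bar> > \<epsilon> * real n})
             \<longlonglongrightarrow> 0"
  shows "(\<lambda>n. measure_pmf.prob (urn_run n (K n))
            {(k, p). case urn_T n k p of enat i \<Rightarrow> real i < real n / 2 | \<infinity> \<Rightarrow> False})
           \<longlonglongrightarrow> 1"
proof -
  define e where "e = (1 - X0) / 2"
  have e: "0 < e" "e \<le> 1" using assms(1,2) by (auto simp: e_def)
  define A where "A n = {k::nat. \<bar>real k - X0 * real n\<bar> > e * real n}" for n
  define a where "a n = measure_pmf.prob (K n) (A n)" for n
  define b where "b n = exp (- (e / 2) * (e * real n / 2 - 1))" for n :: nat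
  define S where "S n = {(k, p). case urn_T n k p of enat i \<Rightarrow> real i < real n / 2 | \<infinity> \<Rightarrow> False}" for n
  have a0: "a \<longlonglongrightarrow> 0" using assms(4)[OF e(1)] unfolding a_def[abs_def] A_def by simp
  have b0: "b \<longlonglongrightarrow> 0" using exp_lim[OF e(1)] unfolding b_def[abs_def] by simp
  have key: "measure_pmf.prob (urn_run n (K n)) (S n) \<ge> 1 - a n - b n" if n: "n > 0" for n
  proof -
    let ?M = "urn_run n (K n)"
    have pt: "measure_pmf.prob (urn_traj n (k, n - k)) ((\<lambda>p. (k, p)) -` (- S n))
              \<le> indicator (A n) k + b n" if k: "k \<in> set_pmf (K n)" for k
    proof -
      have kn: "k \<le> n" using assms(3)[of n] k by auto
      let ?T = "urn_traj n (k, n - k)"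
      have sub: "(\<lambda>p. (k, p)) -` (- S n) \<inter> set_pmf ?T \<subseteq> {p. badp p}"
        using success[OF kn] by (auto simp: S_def)
      have "measure_pmf.prob ?T ((\<lambda>p. (k, p)) -` (- S n))
          = measure_pmf.prob ?T ((\<lambda>p. (k, p)) -` (- S n) \<inter> set_pmf ?T)"
        by (simp add: measure_Int_set_pmf)
      also have "\<dots> \<le> measure_pmf.prob ?T {p. badp p}"
        using sub by (intro measure_pmf.finite_measure_mono) auto
      also have "\<dots> \<le> phi k (n - k)"
        using traj_bad[of "(k, n - k)" n] kn by simp
      also have "\<dots> \<le> indicator (A n) k + b n"
      proof (cases "k \<in> A n")
        case True
        then show ?thesis using phi_le1[of k "n - k"] by (simp add: b_def add_increasing2)
      next
        case False
        then have "real k \<le> X0 * real n + e * real n" by (auto simp: A_def)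
        then have "real (n - k) \<ge> e * real n"
        proof -
          have "e * real n = (real n - X0 * real n) / 2" by (simp add: e_def algebra_simps)
          moreover have "real (n - k) = real n - real k" using kn by (simp add: of_nat_diff)
          ultimately show ?thesis using \<open>real k \<le> X0 * real n + e * real n\<close> by (simp add: field_simps)
        qed
        then have "phi k (n - k) \<le> b n"
          unfolding b_def using phi_exp[OF e kn _ n] by simp
        then show ?thesis using False by simp
      qed
      finally show ?thesis .
    qed
    have "measure_pmf.prob ?M (- S n)
        = (\<integral>k. measure_pmf.prob (urn_traj n (k, n - k)) ((\<lambda>p. (k, p)) -` (- S n)) \<partial>K n)"
      by (simp add: urn_run_def prob_bind_pmf)
    also have "\<dots> \<le> (\<integral>k. indicator (A n) k + b n \<partial>K n)"
    proof (rule integral_mono_AE)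
      show "integrable (K n) (\<lambda>k. measure_pmf.prob (urn_traj n (k, n - k)) ((\<lambda>p. (k, p)) -` (- S n)))"
        by (rule measure_pmf.integrable_const_bound[where B=1]) auto
      show "integrable (K n) (\<lambda>k. indicator (A n) k + b n)"
        by (intro Bochner_Integration.integrable_add integrable_real_indicator) (auto simp: measure_pmf.emeasure_finite less_top[symmetric])
      show "AE k in K n. measure_pmf.prob (urn_traj n (k, n - k)) ((\<lambda>p. (k, p)) -` (- S n))
              \<le> indicator (A n) k + b n"
        using pt by (auto simp: AE_measure_pmf_iff)
    qed
    also have "\<dots> = a n + b n"
      by (subst Bochner_Integration.integral_add) (auto intro!: integrable_real_indicator simp: a_def measure_pmf.emeasure_finite less_top[symmetric])
    finally have c: "measure_pmf.prob ?M (- S n) \<le> a n + b n" .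
    have "measure_pmf.prob ?M (S n) = 1 - measure_pmf.prob ?M (- S n)"
      using measure_pmf.prob_compl[of "- S n" ?M] by simp
    then show ?thesis using c by simp
  qed
  have lo: "(\<lambda>n. 1 - a n - b n) \<longlonglongrightarrow> 1"
    using tendsto_diff[OF tendsto_diff[OF tendsto_const a0] b0] by simp
  have "(\<lambda>n. measure_pmf.prob (urn_run n (K n)) (S n)) \<longlonglongrightarrow> 1"
  proof (rule tendsto_sandwich[OF _ _ lo tendsto_const])
    show "\<forall>\<^sub>F n in sequentially. 1 - a n - b n \<le> measure_pmf.prob (urn_run n (K n)) (S n)"
      using eventually_gt_at_top[of "0::nat"] by (rule eventually_mono) (rule key)
    show "\<forall>\<^sub>F n in sequentially. measure_pmf.prob (urn_run n (K n)) (S n) \<le> 1"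
      by simp
  qed
  then show ?thesis by (simp add: S_def)
qed

end
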